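(* Let $G$ be an abelian group and let $A,B\subseteq G$ be finite, nonempty subsets with $H=\mathsf H(A+B)=\mathsf H(B)$. Then $|(A\cup \{x\})+B|\geq |(A\cup \{x\})+H|+|B+H|-|H|$ for any $x\in G$.
   Context: $\mathsf H(A)=\{g\in G:g+A=A\}$ denotes the stabilizer of $A$; $A+B=\{a+b:a\in A,b\in B\}$. *)

theory Defs
  imports Main
begin

definition sumset :: "'a::ab_group_add set \<Rightarrow> 'a set \<Rightarrow> 'a set" where
  "sumset A B = {a + b | a b. a \<in> A \<and> b \<in> B}"

definition stab :: "'a::ab_group_add set \<Rightarrow> 'a set" where
  "stab A = {g. (\<lambda>a. g + a) ` A = A}"

end

theory Submission
  imports Defs
begin

lemma finite_sumset: "finite A \<Longrightarrow> finite B \<Longrightarrow> finite (sumset A B)"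
proof -
  assume "finite A" "finite B"
  have "sumset A B = (\<lambda>(a,b). a+b) ` (A \<times> B)" by (auto simp: sumset_def)
  then show ?thesis using \<open>finite A\<close> \<open>finite B\<close> by simp
qed

lemma card_translate: "card ((\<lambda>a. g + a) ` S) = card (S::'a::ab_group_add set)"
  by (rule card_image) (simp add: inj_on_def)

lemma stab_mem_iff:
  fixes S :: "'a::ab_group_add set"
  assumes "finite S" shows "g \<in> stab S \<longleftrightarrow> (\<forall>x\<in>S. g + x \<in> S)"
proof
  assume "g \<in> stab S" then have "(\<lambda>a. g + a) ` S = S" by (simp add: stab_def)
  then show "\<forall>x\<in>S. g+x\<in>S" by blast
next
  assume h: "\<forall>x\<in>S. g + x \<in> S"
  have sub: "(\<lambda>a. g + a) ` S \<subseteq> S" using h by blast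
  have "card ((\<lambda>a. g + a) ` S) = card S" by (rule card_translate)
  then have "(\<lambda>a. g + a) ` S = S" using card_subset_eq[OF assms sub] by simp
  then show "g \<in> stab S" by (simp add: stab_def)
qed

lemma stab_add_mem: "g \<in> stab S \<Longrightarrow> x \<in> S \<Longrightarrow> g + x \<in> S"
  unfolding stab_def by blast

lemma stab_zero: "0 \<in> stab (S::'a::ab_group_add set)"
  by (simp add: stab_def)

lemma stab_uminus:
  fixes S :: "'a::ab_group_add set"
  assumes "g \<in> stab S" shows "-g \<in> stab S"
proof -
  have e: "(\<lambda>a. g + a) ` S = S" using assms by (simp add: stab_def)
  have "(\<lambda>a. -g + a) ` S = S"
  proof
    show "(\<lambda>a. -g + a) ` S \<subseteq> S"
    proof
      fix z assume "z \<in> (\<lambda>a. -g + a) ` S"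
      then obtain x where x: "x \<in> S" "z = -g + x" by auto
      from x(1) e obtain a where a: "a \<in> S" "x = g + a" by blast
      then show "z \<in> S" using x by simp
    qed
  next
    show "S \<subseteq> (\<lambda>a. -g + a) ` S"
    proof
      fix a assume "a \<in> S"
      then have "g + a \<in> S" using e by blast
      moreover have "a = -g + (g + a)" by simp
      ultimately show "a \<in> (\<lambda>a. -g + a) ` S" by blast
    qed
  qed
  then show ?thesis by (simp add: stab_def)
qed

lemma stab_add:
  fixes S :: "'a::ab_group_add set"
  assumes "finite S" "g \<in> stab S" "h \<in> stab S" shows "g + h \<in> stab S"
  using assms stab_add_mem by (simp add: stab_mem_iff add.assoc)

lemma stab_diff:
  fixes S :: "'a::ab_group_add set"
  assumes "finite S" "g \<in> stab S" "h \<in> stab S" shows "g - h \<in> stab S"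
  using stab_add[OF assms(1,2) stab_uminus[OF assms(3)]] by simp

lemma stab_sub:
  fixes S :: "'a::ab_group_add set"
  assumes "s \<in> S" shows "stab S \<subseteq> (\<lambda>x. x - s) ` S"
proof
  fix g assume "g \<in> stab S"
  then have "g + s \<in> S" using assms stab_add_mem by blast
  moreover have "g = (g + s) - s" by simp
  ultimately show "g \<in> (\<lambda>x. x - s) ` S" by blast
qed

lemma stab_finite:
  fixes S :: "'a::ab_group_add set"
  assumes "finite S" "S \<noteq> {}" shows "finite (stab S)"
proof -
  obtain s where "s \<in> S" using assms by blast
  then show ?thesis using stab_sub assms(1) finite_subset by blast
qed

lemma stab_sumset:
  fixes A B :: "'a::ab_group_add set"
  assumes "finite A" "finite B" shows "stab A \<subseteq> stab (sumset A B)"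
proof
  fix g assume g: "g \<in> stab A"
  have "\<forall>z\<in>sumset A B. g + z \<in> sumset A B"
  proof
    fix z assume "z \<in> sumset A B"
    then obtain a b where ab: "a \<in> A" "b \<in> B" "z = a + b" by (auto simp: sumset_def)
    then have "g + a \<in> A" using g stab_add_mem by blast
    moreover have "g + z = (g + a) + b" using ab by (simp add: add.assoc)
    ultimately show "g + z \<in> sumset A B" using ab(2) unfolding sumset_def by blast
  qed
  then show "g \<in> stab (sumset A B)"
    using stab_mem_iff[OF finite_sumset[OF assms]] by blast
qed

lemma card_grid:
  fixes y :: "'a::ab_group_add"
  assumes fT: "finite T" and fW: "finite W" and fX: "finite X" and fK: "finite K"
    and t0: "t0 \<in> T" and w0: "w0 \<in> W"
    and mem: "\<And>t w. t \<in> T \<Longrightarrow> w \<in> W \<Longrightarrow> y + t + w \<in> X"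
    and kk: "\<And>t w. t \<in> T \<Longrightarrow> w \<in> W \<Longrightarrow> w - w0 = t - t0 \<Longrightarrow> w - w0 \<in> K"
  shows "card T + card W \<le> card X + card K"
proof -
  let ?U1 = "(\<lambda>w. y + t0 + w) ` W"
  let ?U2 = "(\<lambda>t. y + t + w0) ` T"
  have c1: "card ?U1 = card W" by (rule card_image) (simp add: inj_on_def)
  have c2: "card ?U2 = card T" by (rule card_image) (simp add: inj_on_def)
  have sub: "?U1 \<union> ?U2 \<subseteq> X" using t0 w0 mem by auto
  have int: "?U1 \<inter> ?U2 \<subseteq> (\<lambda>k. y + t0 + w0 + k) ` K"
  proof
    fix z assume "z \<in> ?U1 \<inter> ?U2"
    then obtain w t where w: "w \<in> W" and t: "t \<in> T" and z1: "z = y + t0 + w"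
      and z2: "z = y + t + w0" by auto
    have "y + t0 + w = y + t + w0" using z1 z2 by simp
    then have "w - w0 = t - t0" by (simp add: algebra_simps)
    then have "w - w0 \<in> K" using kk t w by blast
    moreover have "z = y + t0 + w0 + (w - w0)" using z1 by simp
    ultimately show "z \<in> (\<lambda>k. y + t0 + w0 + k) ` K" by blast
  qed
  have "card ?U1 + card ?U2 = card (?U1 \<union> ?U2) + card (?U1 \<inter> ?U2)"
    by (rule card_Un_Int) (use fT fW in auto)
  moreover have "card (?U1 \<union> ?U2) \<le> card X" by (rule card_mono[OF fX sub])
  moreover have "card (?U1 \<inter> ?U2) \<le> card K"
    using card_mono[OF _ int] card_image_le[OF fK, of "\<lambda>k. y + t0 + w0 + k"] fK by fastforce
  ultimately show ?thesis using c1 c2 by linarith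
qed

lemma side:
  fixes C1 C2 :: "'a::ab_group_add set"
  assumes f1: "finite C1" and f2: "finite C2" and ne1: "C1 \<noteq> {}" and ne2: "C2 \<noteq> {}"
    and y2: "y \<in> C2" and y1: "y \<notin> C1"
  shows "card (stab C1) \<le> card (C2 - C1) + card (stab C1 \<inter> stab C2)
    \<or> card (stab C2) \<le> card (C1 - C2) + card (stab C1 \<inter> stab C2)
    \<or> card (stab C2) \<le> card (C2 - C1)"
proof -
  define H1 where "H1 = stab C1"
  define H2 where "H2 = stab C2"
  define K where "K = H1 \<inter> H2"
  have fH1: "finite H1" using stab_finite[OF f1 ne1] H1_def by simp
  have fH2: "finite H2" using stab_finite[OF f2 ne2] H2_def by simp
  have fK: "finite K" using fH1 K_def by simp
  define T where "T = {h\<in>H1. y + h \<in> C2}"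
  define W where "W = {g\<in>H2. y + g \<notin> C1}"
  define W' where "W' = H1 - T"
  define T' where "T' = H2 - W"
  have T0: "0 \<in> T" using y2 stab_zero H1_def T_def by simp
  have W0: "0 \<in> W" using y1 stab_zero H2_def W_def by simp
  have fT: "finite T" using fH1 T_def by simp
  have fW: "finite W" using fH2 W_def by simp
  have fD: "finite (C2 - C1)" using f2 by simp
  have fE: "finite (C1 - C2)" using f1 by simp
  have D: "card T + card W \<le> card (C2 - C1) + card K"
  proof (rule card_grid[OF fT fW fD fK T0 W0])
    fix t w assume t: "t \<in> T" and w: "w \<in> W"
    have "w + (y + t) \<in> C2" using t w T_def W_def H2_def stab_add_mem by blast
    then have inC2: "y + t + w \<in> C2" by (simp add: add.commute)
    have "y + t + w \<notin> C1"
    proof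
      assume "y + t + w \<in> C1"
      moreover have "-t \<in> H1" using t T_def H1_def stab_uminus by blast
      ultimately have "-t + (y + t + w) \<in> C1" using H1_def stab_add_mem by blast
      then have "y + w \<in> C1" by (simp add: algebra_simps)
      then show False using w W_def by simp
    qed
    then show "y + t + w \<in> C2 - C1" using inC2 by simp
  next
    fix t w assume t: "t \<in> T" and w: "w \<in> W" and eq: "w - 0 = t - 0"
    have "w \<in> H1" using t eq T_def by simp
    then show "w - 0 \<in> K" using w W_def K_def by simp
  qed
  have cH1: "card H1 = card T + card W'"
    using card_Diff_subset[OF fT, of H1] card_mono[OF fH1, of T] T_def W'_def by auto
  have cH2: "card H2 = card W + card T'"
    using card_Diff_subset[OF fW, of H2] card_mono[OF fH2, of W] W_def T'_def by auto
  show ?thesis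
  proof (cases "W' = {}")
    case True
    then have "card T = card H1" using cH1 by simp
    then show ?thesis using D H1_def H2_def K_def by simp
  next
    case False
    then obtain h0 where h0: "h0 \<in> W'" by blast
    show ?thesis
    proof (cases "T' = {}")
      case True
      have "(\<lambda>w. y + w) ` W \<subseteq> C2 - C1"
      proof
        fix z assume "z \<in> (\<lambda>w. y + w) ` W"
        then obtain w where w: "w \<in> W" "z = y + w" by auto
        have "w + y \<in> C2" using w y2 W_def H2_def stab_add_mem by blast
        then show "z \<in> C2 - C1" using w W_def by (simp add: add.commute)
      qed
      then have "card ((\<lambda>w. y + w) ` W) \<le> card (C2 - C1)" using card_mono[OF fD] by blast
      moreover have "card W = card H2" using cH2 True by simp
      ultimately show ?thesis using card_translate[of y W] H2_def by simp
    next
      case False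
      then obtain g0 where g0: "g0 \<in> T'" by blast
      have fW': "finite W'" using fH1 W'_def by simp
      have fT': "finite T'" using fH2 T'_def by simp
      have E: "card W' + card T' \<le> card (C1 - C2) + card K"
      proof (rule card_grid[OF fW' fT' fE fK h0 g0])
        fix h g assume h: "h \<in> W'" and g: "g \<in> T'"
        have "h + (y + g) \<in> C1" using h g W'_def T'_def W_def H1_def stab_add_mem by blast
        then have inC1: "y + h + g \<in> C1" by (simp add: algebra_simps)
        have "y + h + g \<notin> C2"
        proof
          assume "y + h + g \<in> C2"
          moreover have "-g \<in> H2" using g T'_def H2_def stab_uminus by blast
          ultimately have "-g + (y + h + g) \<in> C2" using H2_def stab_add_mem by blast
          then have "y + h \<in> C2" by (simp add: algebra_simps)
          then show False using h W'_def T_def H1_def by simp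
        qed
        then show "y + h + g \<in> C1 - C2" using inC1 by simp
      next
        fix h g assume h: "h \<in> W'" and g: "g \<in> T'" and eq: "g - g0 = h - h0"
        have "g - g0 \<in> H2" using stab_diff[OF f2] g g0 T'_def H2_def by simp
        moreover have "h - h0 \<in> H1" using stab_diff[OF f1] h h0 W'_def H1_def by simp
        ultimately show "g - g0 \<in> K" using eq K_def by simp
      qed
      have "card H1 + card H2 \<le> card (C2 - C1) + card (C1 - C2) + 2 * card K"
        using D E cH1 cH2 by linarith
      then have "card H1 \<le> card (C2 - C1) + card K \<or> card H2 \<le> card (C1 - C2) + card K"
        by linarith
      then show ?thesis using H1_def H2_def K_def by blast
    qed
  qed
qed

lemma sub_case:
  fixes C1 C2 :: "'a::ab_group_add set"
  assumes f1: "finite C1" and f2: "finite C2" and ne1: "C1 \<noteq> {}" and ne2: "C2 \<noteq> {}"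
    and sub: "C2 \<subseteq> C1"
  shows "card (stab C1) \<le> card (stab C1 \<inter> stab C2) \<or> card (stab C2) \<le> card (C1 - C2)"
proof (cases "stab C1 \<subseteq> stab C2")
  case True
  then have "stab C1 \<inter> stab C2 = stab C1" by blast
  then show ?thesis by simp
next
  case False
  then obtain h where h1: "h \<in> stab C1" and h2: "h \<notin> stab C2" by blast
  then obtain x where x: "x \<in> C2" and hx: "h + x \<notin> C2" using stab_mem_iff[OF f2] by blast
  have "(\<lambda>g. (h + x) + g) ` stab C2 \<subseteq> C1 - C2"
  proof
    fix z assume "z \<in> (\<lambda>g. (h + x) + g) ` stab C2"
    then obtain g where g: "g \<in> stab C2" "z = h + x + g" by auto
    have "g + x \<in> C2" using g x stab_add_mem by blast
    then have "h + (g + x) \<in> C1" using sub h1 stab_add_mem by blast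
    then have zin: "z \<in> C1" using g by (simp add: algebra_simps)
    have "z \<notin> C2"
    proof
      assume "z \<in> C2"
      then have "-g + z \<in> C2" using stab_uminus[OF g(1)] stab_add_mem by blast
      then show False using hx g by (simp add: algebra_simps)
    qed
    then show "z \<in> C1 - C2" using zin by simp
  qed
  then have "card ((\<lambda>g. (h + x) + g) ` stab C2) \<le> card (C1 - C2)"
    using card_mono f1 by blast
  then show ?thesis using card_translate[of "h + x" "stab C2"] by simp
qed

lemma union_core:
  fixes C1 C2 :: "'a::ab_group_add set"
  assumes f1: "finite C1" and f2: "finite C2" and ne1: "C1 \<noteq> {}" and ne2: "C2 \<noteq> {}"
  shows "card (stab C1) \<le> card (C2 - C1) + card (stab C1 \<inter> stab C2)
    \<or> card (stab C2) \<le> card (C1 - C2) + card (stab C1 \<inter> stab C2)"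
proof (cases "C2 - C1 = {}")
  case True
  then have "C2 \<subseteq> C1" by blast
  from sub_case[OF f1 f2 ne1 ne2 this] show ?thesis by linarith
next
  case False
  then obtain y where y: "y \<in> C2" "y \<notin> C1" by blast
  show ?thesis
  proof (cases "C1 - C2 = {}")
    case True
    then have "C1 \<subseteq> C2" by blast
    from sub_case[OF f2 f1 ne2 ne1 this] show ?thesis by (simp add: Int_commute) linarith
  next
    case False
    then obtain z where z: "z \<in> C1" "z \<notin> C2" by blast
    have P: "card (stab C1) \<le> card (C2 - C1) + card (stab C1 \<inter> stab C2)
      \<or> card (stab C2) \<le> card (C1 - C2) + card (stab C1 \<inter> stab C2)
      \<or> card (stab C2) \<le> card (C2 - C1)"
      by (rule side[OF f1 f2 ne1 ne2 y])
    have Q: "card (stab C2) \<le> card (C1 - C2) + card (stab C2 \<inter> stab C1)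
      \<or> card (stab C1) \<le> card (C2 - C1) + card (stab C2 \<inter> stab C1)
      \<or> card (stab C1) \<le> card (C1 - C2)"
      by (rule side[OF f2 f1 ne2 ne1 z])
    show ?thesis using P Q by (simp add: Int_commute) linarith
  qed
qed

lemma union_bound:
  fixes C1 C2 :: "'a::ab_group_add set"
  assumes f1: "finite C1" and f2: "finite C2" and ne1: "C1 \<noteq> {}" and ne2: "C2 \<noteq> {}"
    and n1: "N \<le> card C1 + card (stab C1)" and n2: "N \<le> card C2 + card (stab C2)"
  shows "N \<le> card (C1 \<union> C2) + card (stab (C1 \<union> C2))"
proof -
  have fU: "finite (C1 \<union> C2)" using f1 f2 by simp
  have Ksub: "stab C1 \<inter> stab C2 \<subseteq> stab (C1 \<union> C2)"
  proof
    fix g assume g: "g \<in> stab C1 \<inter> stab C2"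
    have "\<forall>x\<in>C1 \<union> C2. g + x \<in> C1 \<union> C2" using g stab_add_mem by blast
    then show "g \<in> stab (C1 \<union> C2)" using stab_mem_iff[OF fU] by blast
  qed
  have "finite (stab (C1 \<union> C2))" using stab_finite[OF fU] ne1 by simp
  then have cK: "card (stab C1 \<inter> stab C2) \<le> card (stab (C1 \<union> C2))"
    using card_mono Ksub by blast
  have u1: "card (C1 \<union> C2) = card C1 + card (C2 - C1)"
  proof -
    have "C1 \<union> C2 = C1 \<union> (C2 - C1)" by blast
    then show ?thesis using card_Un_disjoint[of C1 "C2 - C1"] f1 f2 by simp
  qed
  have u2: "card (C1 \<union> C2) = card C2 + card (C1 - C2)"
  proof -
    have "C1 \<union> C2 = C2 \<union> (C1 - C2)" by blast
    then show ?thesis using card_Un_disjoint[of C2 "C1 - C2"] f1 f2 by simp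
  qed
  show ?thesis using union_core[OF f1 f2 ne1 ne2] u1 u2 cK n1 n2 by linarith
qed

lemma union_family:
  fixes C :: "'b \<Rightarrow> 'a::ab_group_add set"
  assumes "finite I" "I \<noteq> {}"
    and "\<And>i. i \<in> I \<Longrightarrow> finite (C i) \<and> C i \<noteq> {} \<and> N \<le> card (C i) + card (stab (C i))"
  shows "N \<le> card (\<Union>i\<in>I. C i) + card (stab (\<Union>i\<in>I. C i))"
  using assms
proof (induction I rule: finite_ne_induct)
  case (singleton x)
  then show ?case by simp
next
  case (insert x F)
  have h1: "finite (C x)" "C x \<noteq> {}" "N \<le> card (C x) + card (stab (C x))"
    using insert.prems by auto
  have h2: "N \<le> card (\<Union>i\<in>F. C i) + card (stab (\<Union>i\<in>F. C i))"
    using insert.IH insert.prems by auto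
  have f2: "finite (\<Union>i\<in>F. C i)" using insert.hyps insert.prems by auto
  have ne2: "(\<Union>i\<in>F. C i) \<noteq> {}" using insert.hyps insert.prems by auto
  have "(\<Union>i\<in>insert x F. C i) = C x \<union> (\<Union>i\<in>F. C i)" by simp
  then show ?case using union_bound[OF h1(1) f2 h1(2) ne2 h1(3) h2] by simp
qed

lemma weak_kneser:
  fixes A B :: "'a::ab_group_add set"
  assumes "finite A" "A \<noteq> {}" "finite B" "B \<noteq> {}"
  shows "card A + card B \<le> card (sumset A B) + card (stab (sumset A B))"
  using assms
proof (induction "card B" arbitrary: A B rule: less_induct)
  case less
  have fA: "finite A" and neA: "A \<noteq> {}" and fB: "finite B" and neB: "B \<noteq> {}"
    using less.prems by auto
  define S where "S = sumset A B"
  have fS: "finite S" using finite_sumset[OF fA fB] S_def by simp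
  have neS: "S \<noteq> {}" using neA neB S_def by (auto simp: sumset_def)
  have fHS: "finite (stab S)" using stab_finite[OF fS neS] .
  show ?case
  proof (cases "\<exists>b\<in>B. \<forall>a\<in>A. \<forall>y\<in>B. a - b + y \<in> A")
    case True
    then obtain b where b: "b \<in> B" and hb: "\<forall>a\<in>A. \<forall>y\<in>B. a - b + y \<in> A" by blast
    have "(\<lambda>y. y - b) ` B \<subseteq> stab S"
    proof
      fix g assume "g \<in> (\<lambda>y. y - b) ` B"
      then obtain y where y: "y \<in> B" "g = y - b" by auto
      have "\<forall>x\<in>A. g + x \<in> A"
      proof
        fix x assume "x \<in> A"
        then have "x - b + y \<in> A" using hb y by blast
        moreover have "g + x = x - b + y" using y by (simp add: algebra_simps)
        ultimately show "g + x \<in> A" by metis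
      qed
      then have "g \<in> stab A" using stab_mem_iff[OF fA] by blast
      then show "g \<in> stab S" using stab_sumset[OF fA fB] S_def by blast
    qed
    then have "card ((\<lambda>y. y - b) ` B) \<le> card (stab S)" using card_mono[OF fHS] by blast
    moreover have "card ((\<lambda>y. y - b) ` B) = card B" by (rule card_image) (simp add: inj_on_def)
    moreover have "(\<lambda>a. a + b) ` A \<subseteq> S" using b S_def by (auto simp: sumset_def)
    then have "card ((\<lambda>a. a + b) ` A) \<le> card S" using card_mono[OF fS] by blast
    moreover have "card ((\<lambda>a. a + b) ` A) = card A" by (rule card_image) (simp add: inj_on_def)
    ultimately show ?thesis using S_def by simp
  next
    case False
    then have "\<forall>b\<in>B. \<exists>a. a \<in> A \<and> (\<exists>y\<in>B. a - b + y \<notin> A)" by blast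
    then obtain f where f: "\<forall>b\<in>B. f b \<in> A \<and> (\<exists>y\<in>B. f b - b + y \<notin> A)"
      using bchoice by metis
    define e where "e b = f b - b" for b
    define A' where "A' b = A \<union> (\<lambda>y. y + e b) ` B" for b
    define B' where "B' b = {y\<in>B. y + e b \<in> A}" for b
    define C where "C b = sumset (A' b) (B' b)" for b
    have CS: "C b \<subseteq> S" for b
    proof
      fix z assume "z \<in> C b"
      then obtain u v where uv: "u \<in> A' b" "v \<in> B' b" "z = u + v"
        unfolding C_def sumset_def by blast
      show "z \<in> S"
      proof (cases "u \<in> A")
        case True
        then show ?thesis using uv B'_def S_def unfolding sumset_def by blast
      next
        case False
        then obtain y where y: "y \<in> B" "u = y + e b" using uv A'_def by auto
        have "v + e b \<in> A" using uv B'_def by simp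
        moreover have "z = (v + e b) + y" using uv y by (simp add: algebra_simps)
        ultimately show ?thesis using y S_def unfolding sumset_def by blast
      qed
    qed
    have key: "finite (C b) \<and> C b \<noteq> {} \<and> card A + card B \<le> card (C b) + card (stab (C b))"
      if b: "b \<in> B" for b
    proof -
      have bB': "b \<in> B' b" using b f e_def B'_def by simp
      obtain y where y: "y \<in> B" "f b - b + y \<notin> A" using f b by blast
      have "y + e b = f b - b + y" using e_def by (simp add: algebra_simps)
      then have "y + e b \<notin> A" using y by metis
      then have "y \<notin> B' b" using B'_def by simp
      then have ps: "B' b \<subset> B" using y B'_def by auto
      have lt: "card (B' b) < card B" by (rule psubset_card_mono[OF fB ps])
      have fB': "finite (B' b)" using fB B'_def by simp
      have neB': "B' b \<noteq> {}" using bB' by blast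
      have fA': "finite (A' b)" using fA fB A'_def by simp
      have neA': "A' b \<noteq> {}" using neA A'_def by simp
      have IH: "card (A' b) + card (B' b) \<le> card (C b) + card (stab (C b))"
        using less.hyps[OF lt fA' neA' fB' neB'] C_def by simp
      let ?U = "(\<lambda>y. y + e b) ` B"
      have cU: "card ?U = card B" by (rule card_image) (simp add: inj_on_def)
      have AU: "A \<inter> ?U = (\<lambda>y. y + e b) ` (B' b)" using B'_def by auto
      have cAU: "card (A \<inter> ?U) = card (B' b)" unfolding AU by (rule card_image) (simp add: inj_on_def)
      have "card A + card ?U = card (A \<union> ?U) + card (A \<inter> ?U)"
        by (rule card_Un_Int) (use fA fB in auto)
      then have "card (A' b) + card (B' b) = card A + card B" using cU cAU A'_def by simp
      moreover have "finite (C b)" using finite_sumset[OF fA' fB'] C_def by simp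
      moreover have "C b \<noteq> {}" using neA' neB' C_def by (auto simp: sumset_def)
      ultimately show ?thesis using IH by simp
    qed
    have cover: "S = (\<Union>b\<in>B. C b)"
    proof
      show "S \<subseteq> (\<Union>b\<in>B. C b)"
      proof
        fix z assume "z \<in> S"
        then obtain a b where ab: "a \<in> A" "b \<in> B" "z = a + b" using S_def by (auto simp: sumset_def)
        have "b \<in> B' b" using ab f e_def B'_def by simp
        moreover have "a \<in> A' b" using ab A'_def by simp
        ultimately have "z \<in> C b" using ab C_def unfolding sumset_def by blast
        then show "z \<in> (\<Union>b\<in>B. C b)" using ab by blast
      qed
    next
      show "(\<Union>b\<in>B. C b) \<subseteq> S" using CS by blast
    qed
    have "card A + card B \<le> card (\<Union>b\<in>B. C b) + card (stab (\<Union>b\<in>B. C b))"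
      by (rule union_family[OF fB neB]) (use key in blast)
    then show ?thesis using cover S_def by simp
  qed
qed

lemma kneser:
  fixes A B :: "'a::ab_group_add set"
  assumes fA: "finite A" and neA: "A \<noteq> {}" and fB: "finite B" and neB: "B \<noteq> {}"
  shows "card (sumset A (stab (sumset A B))) + card (sumset B (stab (sumset A B)))
    \<le> card (sumset A B) + card (stab (sumset A B))"
proof -
  define S where "S = sumset A B"
  define H where "H = stab S"
  have fS: "finite S" using finite_sumset[OF fA fB] S_def by simp
  have neS: "S \<noteq> {}" using neA neB S_def by (auto simp: sumset_def)
  have fH: "finite H" using stab_finite[OF fS neS] H_def by simp
  have H0: "0 \<in> H" using stab_zero H_def by simp
  have fA2: "finite (sumset A H)" using finite_sumset[OF fA fH] .
  have fB2: "finite (sumset B H)" using finite_sumset[OF fB fH] .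
  have neA2: "sumset A H \<noteq> {}" using neA H0 by (auto simp: sumset_def)
  have neB2: "sumset B H \<noteq> {}" using neB H0 by (auto simp: sumset_def)
  have eq: "sumset (sumset A H) (sumset B H) = S"
  proof
    show "sumset (sumset A H) (sumset B H) \<subseteq> S"
    proof
      fix z assume "z \<in> sumset (sumset A H) (sumset B H)"
      then obtain a h1 b h2 where w: "a \<in> A" "h1 \<in> H" "b \<in> B" "h2 \<in> H" "z = (a + h1) + (b + h2)"
        unfolding sumset_def by blast
      have "h1 + h2 \<in> H" using stab_add[OF fS] w H_def by simp
      moreover have "a + b \<in> S" using w S_def unfolding sumset_def by blast
      ultimately have "(h1 + h2) + (a + b) \<in> S" using stab_add_mem H_def by blast
      moreover have "z = (h1 + h2) + (a + b)" using w by (simp add: algebra_simps)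
      ultimately show "z \<in> S" by simp
    qed
  next
    show "S \<subseteq> sumset (sumset A H) (sumset B H)"
    proof
      fix z assume "z \<in> S"
      then obtain a b where w: "a \<in> A" "b \<in> B" "z = a + b" using S_def by (auto simp: sumset_def)
      have "a + 0 \<in> sumset A H" using w H0 unfolding sumset_def by blast
      moreover have "b + 0 \<in> sumset B H" using w H0 unfolding sumset_def by blast
      ultimately show "z \<in> sumset (sumset A H) (sumset B H)" using w unfolding sumset_def by fastforce
    qed
  qed
  show ?thesis using weak_kneser[OF fA2 neA2 fB2 neB2] eq S_def H_def by simp
qed

theorem lemma2p6:
  fixes A B H :: "'a::ab_group_add set" and x :: 'a
  assumes "finite A" "A \<noteq> {}" "finite B" "B \<noteq> {}"
    and "H = stab (sumset A B)" and "H = stab B"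
  shows "int (card (sumset (A \<union> {x}) B))
           \<ge> int (card (sumset (A \<union> {x}) H)) + int (card (sumset B H)) - int (card H)"
proof -
  note fA = assms(1) and neA = assms(2) and fB = assms(3) and neB = assms(4)
  define S where "S = sumset A B"
  define X where "X = A \<union> {x}"
  have fS: "finite S" using finite_sumset[OF fA fB] S_def by simp
  have neS: "S \<noteq> {}" using neA neB S_def by (auto simp: sumset_def)
  have HS: "H = stab S" using assms(5) S_def by simp
  have fH: "finite H" using stab_finite[OF fS neS] HS by simp
  have fX: "finite X" using fA X_def by simp
  have neX: "X \<noteq> {}" using X_def by simp
  show ?thesis
  proof (cases "\<forall>y\<in>B. x + y \<in> S")
    case True
    have XB: "sumset X B = S"
    proof
      show "sumset X B \<subseteq> S"
      proof
        fix z assume "z \<in> sumset X B"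
        then obtain u v where uv: "u \<in> X" "v \<in> B" "z = u + v" unfolding sumset_def by blast
        show "z \<in> S"
        proof (cases "u = x")
          case True then show ?thesis using uv \<open>\<forall>y\<in>B. x + y \<in> S\<close> by simp
        next
          case False then have "u \<in> A" using uv X_def by simp
          then show ?thesis using uv S_def unfolding sumset_def by blast
        qed
      qed
    next
      show "S \<subseteq> sumset X B" using S_def X_def unfolding sumset_def by blast
    qed
    have "card (sumset X (stab (sumset X B))) + card (sumset B (stab (sumset X B)))
      \<le> card (sumset X B) + card (stab (sumset X B))" by (rule kneser[OF fX neX fB neB])
    then have "card (sumset X H) + card (sumset B H) \<le> card (sumset X B) + card H"
      using XB HS by simp
    then show ?thesis using X_def by simp
  next
    case False
    then obtain y where y: "y \<in> B" "x + y \<notin> S" by blast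
    have K: "card (sumset A H) + card (sumset B H) \<le> card S + card H"
      using kneser[OF fA neA fB neB] S_def HS by simp
    have sub1: "S \<union> (\<lambda>h. x + y + h) ` H \<subseteq> sumset X B"
    proof
      fix z assume "z \<in> S \<union> (\<lambda>h. x + y + h) ` H"
      then show "z \<in> sumset X B"
      proof
        assume "z \<in> S" then show ?thesis using S_def X_def unfolding sumset_def by blast
      next
        assume "z \<in> (\<lambda>h. x + y + h) ` H"
        then obtain h where h: "h \<in> H" "z = x + y + h" by auto
        have "h + y \<in> B" using h y assms(6) stab_add_mem by blast
        moreover have "z = x + (h + y)" using h by (simp add: algebra_simps)
        moreover have "x \<in> X" using X_def by simp
        ultimately show ?thesis unfolding sumset_def by blast
      qed
    qed
    have disj: "S \<inter> (\<lambda>h. x + y + h) ` H = {}"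
    proof (rule ccontr)
      assume "S \<inter> (\<lambda>h. x + y + h) ` H \<noteq> {}"
      then obtain h where h: "h \<in> H" "x + y + h \<in> S" by blast
      have "-h \<in> H" using h stab_uminus HS by blast
      then have "-h + (x + y + h) \<in> S" using h HS stab_add_mem by blast
      then show False using y by (simp add: algebra_simps)
    qed
    have fXB: "finite (sumset X B)" using finite_sumset[OF fX fB] .
    have "card (S \<union> (\<lambda>h. x + y + h) ` H) = card S + card ((\<lambda>h. x + y + h) ` H)"
      by (rule card_Un_disjoint) (use fS fH disj in auto)
    then have c1: "card S + card H \<le> card (sumset X B)"
      using card_mono[OF fXB sub1] card_translate[of "x + y" H] by simp
    have sub2: "sumset X H \<subseteq> sumset A H \<union> (\<lambda>h. x + h) ` H"
      using X_def unfolding sumset_def by blast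
    have "card (sumset X H) \<le> card (sumset A H \<union> (\<lambda>h. x + h) ` H)"
      by (rule card_mono[OF _ sub2]) (use finite_sumset[OF fA fH] fH in simp)
    also have "\<dots> \<le> card (sumset A H) + card ((\<lambda>h. x + h) ` H)" by (rule card_Un_le)
    finally have c2: "card (sumset X H) \<le> card (sumset A H) + card H"
      using card_translate[of x H] by simp
    show ?thesis using K c1 c2 X_def S_def by simp
  qed
qed

end
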